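(* Let $V\subseteq\mathcal V$ be finite and $\Theta,\Psi\subseteq\mathcal P(\mathcal H_V)$ arbitrary. Then (1) $\Theta\preceq_{dem}\Psi$ iff $(I-\Psi)\preceq_{ang}(I-\Theta)$; (2) $\Theta\le_S\Psi$ iff $(I-\Psi)\le_H(I-\Theta)$, where $I-\Theta=\{I-M:M\in\Theta\}$.
   Context: $\mathcal H_V$ is a finite-dimensional Hilbert space with identity $I$. $\mathcal D(\mathcal H_V)$: partial density operators; $\mathcal P(\mathcal H_V)$: effects (positive operators with eigenvalues in $[0,1]$); $\sqsubseteq$: Löwner order. $\mathrm{Exp}_{dem}(\rho\models\Theta)=\inf_{M\in\Theta}{\rm tr}(M\rho)$ (${\rm tr}(\rho)$ if $\Theta=\emptyset$); $\mathrm{Exp}_{ang}(\rho\models\Theta)=\sup_{M\in\Theta}{\rm tr}(M\rho)$ ($0$ if $\Theta=\emptyset$). $\Theta\preceq_{dem}\Psi$ iff $\mathrm{Exp}_{dem}(\rho\models\Theta)\le\mathrm{Exp}_{dem}(\rho\models\Psi)$ for all $\rho\in\mathcal D(\mathcal H_V)$; $\Theta\preceq_{ang}\Psi$ iff $\mathrm{Exp}_{ang}(\rho\models\Theta)\le\mathrm{Exp}_{ang}(\rho\models\Psi)$ for all $\rho\in\mathcal D(\mathcal H_V)$. $\Theta\le_H\Psi$ iff $\forall M\in\Theta\,\exists N\in\Psi:M\sqsubseteq N$; $\Theta\le_S\Psi$ iff $\forall N\in\Psi\,\exists M\in\Theta:M\sqsubseteq N$. *)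

theory Defs
  imports "Jordan_Normal_Form.Matrix"
begin

text \<open>Operators on the d-dimensional Hilbert space H_V are represented as
  complex d x d matrices (d = dim H_V).\<close>

definition mtrace :: "complex mat \<Rightarrow> complex" where
  "mtrace A = (\<Sum>i<dim_row A. A $$ (i, i))"

definition positive_op :: "nat \<Rightarrow> complex mat \<Rightarrow> bool" where
  "positive_op d A \<longleftrightarrow> A \<in> carrier_mat d d \<and>
     (\<forall>v \<in> carrier_vec d. Im (conjugate v \<bullet> (A *\<^sub>v v)) = 0 \<and> Re (conjugate v \<bullet> (A *\<^sub>v v)) \<ge> 0)"

definition loewner_le :: "nat \<Rightarrow> complex mat \<Rightarrow> complex mat \<Rightarrow> bool" where
  "loewner_le d A B \<longleftrightarrow> A \<in> carrier_mat d d \<and> B \<in> carrier_mat d d \<and> positive_op d (B - A)"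

definition pdensity :: "nat \<Rightarrow> complex mat set" where
  "pdensity d = {\<rho>. positive_op d \<rho> \<and> Re (mtrace \<rho>) \<le> 1}"

definition effects :: "nat \<Rightarrow> complex mat set" where
  "effects d = {M. positive_op d M \<and> loewner_le d M (1\<^sub>m d)}"

definition exp_dem :: "complex mat \<Rightarrow> complex mat set \<Rightarrow> real" where
  "exp_dem \<rho> \<Theta> = (if \<Theta> = {} then Re (mtrace \<rho>) else (INF M\<in>\<Theta>. Re (mtrace (M * \<rho>))))"

definition exp_ang :: "complex mat \<Rightarrow> complex mat set \<Rightarrow> real" where
  "exp_ang \<rho> \<Theta> = (if \<Theta> = {} then 0 else (SUP M\<in>\<Theta>. Re (mtrace (M * \<rho>))))"

definition dem_le :: "nat \<Rightarrow> complex mat set \<Rightarrow> complex mat set \<Rightarrow> bool" where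
  "dem_le d \<Theta> \<Psi> \<longleftrightarrow> (\<forall>\<rho> \<in> pdensity d. exp_dem \<rho> \<Theta> \<le> exp_dem \<rho> \<Psi>)"

definition ang_le :: "nat \<Rightarrow> complex mat set \<Rightarrow> complex mat set \<Rightarrow> bool" where
  "ang_le d \<Theta> \<Psi> \<longleftrightarrow> (\<forall>\<rho> \<in> pdensity d. exp_ang \<rho> \<Theta> \<le> exp_ang \<rho> \<Psi>)"

definition hoare_le :: "nat \<Rightarrow> complex mat set \<Rightarrow> complex mat set \<Rightarrow> bool" where
  "hoare_le d \<Theta> \<Psi> \<longleftrightarrow> (\<forall>M \<in> \<Theta>. \<exists>N \<in> \<Psi>. loewner_le d M N)"

definition smyth_le :: "nat \<Rightarrow> complex mat set \<Rightarrow> complex mat set \<Rightarrow> bool" where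
  "smyth_le d \<Theta> \<Psi> \<longleftrightarrow> (\<forall>N \<in> \<Psi>. \<exists>M \<in> \<Theta>. loewner_le d M N)"

definition compl_set :: "nat \<Rightarrow> complex mat set \<Rightarrow> complex mat set" where
  "compl_set d \<Theta> = (\<lambda>M. 1\<^sub>m d - M) ` \<Theta>"

end

theory Submission
  imports Defs
begin

lemma mat_unit:
  fixes A :: "complex mat"
  assumes A: "A \<in> carrier_mat d d" and i: "i < d"
  shows "A *\<^sub>v unit_vec d i = col A i"
  by (rule eq_vecI) (use A i in auto)

lemma qform:
  fixes A :: "complex mat" and c :: complex
  assumes A: "A \<in> carrier_mat d d" and i: "i < d" and j: "j < d" and ij: "i \<noteq> j"
  shows "conjugate (unit_vec d i + c \<cdot>\<^sub>v unit_vec d j) \<bullet> (A *\<^sub>v (unit_vec d i + c \<cdot>\<^sub>v unit_vec d j))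
     = A$$(i,i) + c * A$$(i,j) + cnj c * A$$(j,i) + cnj c * c * A$$(j,j)"
proof -
  let ?v = "unit_vec d i + c \<cdot>\<^sub>v unit_vec d j :: complex vec"
  have v: "?v \<in> carrier_vec d" by simp
  have Av: "A *\<^sub>v ?v = col A i + c \<cdot>\<^sub>v col A j"
    using A i j by (simp add: mult_add_distrib_mat_vec mult_mat_vec mat_unit)
  have cv: "conjugate ?v = unit_vec d i + cnj c \<cdot>\<^sub>v unit_vec d j"
    by (rule eq_vecI) (auto simp: conjugate_vec_def unit_vec_def)
  show ?thesis unfolding cv Av using A i j
    apply (subst add_scalar_prod_distrib[of _ d])
    apply auto
    apply (simp add: ring_distribs mult.assoc)
    done
qed
lemma qdiag:
  fixes A :: "complex mat"
  assumes A: "A \<in> carrier_mat d d" and i: "i < d"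
  shows "conjugate (unit_vec d i) \<bullet> (A *\<^sub>v unit_vec d i) = A$$(i,i)"
proof -
  have cv: "conjugate (unit_vec d i) = (unit_vec d i :: complex vec)"
    by (rule eq_vecI) (auto simp: conjugate_vec_def unit_vec_def)
  show ?thesis unfolding cv mat_unit[OF A i] using A i by simp
qed

lemma eff_bound:
  assumes M: "M \<in> effects d" and i: "i < d" and j: "j < d"
  shows "cmod (M$$(i,j)) \<le> 2"
proof -
  have Mc: "M \<in> carrier_mat d d" and pM: "positive_op d M" and pN: "positive_op d (1\<^sub>m d - M)"
    using M by (auto simp: effects_def loewner_le_def)
  have Nc: "1\<^sub>m d - M \<in> carrier_mat d d" using Mc by (simp add: minus_carrier_mat)
  have qM: "Im (conjugate v \<bullet> (M *\<^sub>v v)) = 0 \<and> Re (conjugate v \<bullet> (M *\<^sub>v v)) \<ge> 0" if "v \<in> carrier_vec d" for v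
    using pM that unfolding positive_op_def by blast
  have qN: "Im (conjugate v \<bullet> ((1\<^sub>m d - M) *\<^sub>v v)) = 0 \<and> Re (conjugate v \<bullet> ((1\<^sub>m d - M) *\<^sub>v v)) \<ge> 0" if "v \<in> carrier_vec d" for v
    using pN that unfolding positive_op_def by blast
  have dM: "Im (M$$(k,k)) = 0 \<and> Re (M$$(k,k)) \<ge> 0 \<and> Re (M$$(k,k)) \<le> 1" if k: "k < d" for k
    using qM[of "unit_vec d k"] qN[of "unit_vec d k"] qdiag[OF Mc k] qdiag[OF Nc k] k Mc by auto
  show ?thesis
  proof (cases "i = j")
    case True
    then show ?thesis using dM[OF i] cmod_le[of "M$$(i,j)"] by auto
  next
    case False
    define x where "x = M$$(i,j)"
    define y where "y = M$$(j,i)"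
    define a where "a = M$$(i,i)"
    define b where "b = M$$(j,j)"
    have e1: "Im (a + 1 * x + cnj 1 * y + cnj 1 * 1 * b) = 0 \<and> Re (a + 1 * x + cnj 1 * y + cnj 1 * 1 * b) \<ge> 0"
      using qM[of "unit_vec d i + 1 \<cdot>\<^sub>v unit_vec d j"] qform[OF Mc i j False, of 1]
      unfolding x_def y_def a_def b_def by simp
    have e2: "Im (a + \<i> * x + cnj \<i> * y + cnj \<i> * \<i> * b) = 0 \<and> Re (a + \<i> * x + cnj \<i> * y + cnj \<i> * \<i> * b) \<ge> 0"
      using qM[of "unit_vec d i + \<i> \<cdot>\<^sub>v unit_vec d j"] qform[OF Mc i j False, of \<i>]
      unfolding x_def y_def a_def b_def by simp
    have e3: "Re ((1 - a) + 1 * (-x) + cnj 1 * (-y) + cnj 1 * 1 * (1 - b)) \<ge> 0"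
      using qN[of "unit_vec d i + 1 \<cdot>\<^sub>v unit_vec d j"] qform[OF Nc i j False, of 1] Mc i j False
      unfolding x_def y_def a_def b_def by simp
    have e4: "Re ((1 - a) + \<i> * (-x) + cnj \<i> * (-y) + cnj \<i> * \<i> * (1 - b)) \<ge> 0"
      using qN[of "unit_vec d i + \<i> \<cdot>\<^sub>v unit_vec d j"] qform[OF Nc i j False, of \<i>] Mc i j False
      unfolding x_def y_def a_def b_def by simp
    have da: "Im a = 0" "Re a \<ge> 0" "Re a \<le> 1" using dM[OF i] a_def by auto
    have db: "Im b = 0" "Re b \<ge> 0" "Re b \<le> 1" using dM[OF j] b_def by auto
    have "\<bar>Re x\<bar> \<le> 1" "\<bar>Im x\<bar> \<le> 1"
      using e1 e2 e3 e4 da db by auto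
    then show ?thesis using cmod_le[of x] unfolding x_def by linarith
  qed
qed
lemma trace_prod:
  fixes M \<rho> :: "complex mat"
  assumes M: "M \<in> carrier_mat d d" and r: "\<rho> \<in> carrier_mat d d"
  shows "mtrace (M * \<rho>) = (\<Sum>i<d. \<Sum>j<d. M$$(i,j) * \<rho>$$(j,i))"
  unfolding mtrace_def using M r
  by (auto simp: scalar_prod_def atLeast0LessThan intro!: sum.cong)

lemma trace_lower:
  assumes M: "M \<in> effects d" and r: "\<rho> \<in> carrier_mat d d"
  shows "Re (mtrace (M * \<rho>)) \<ge> - (\<Sum>i<d. \<Sum>j<d. 2 * cmod (\<rho>$$(j,i)))"
proof -
  have Mc: "M \<in> carrier_mat d d" using M by (auto simp: effects_def positive_op_def)
  have "\<bar>Re (mtrace (M * \<rho>))\<bar> \<le> cmod (mtrace (M * \<rho>))" by (rule abs_Re_le_cmod)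
  also have "\<dots> \<le> (\<Sum>i<d. cmod (\<Sum>j<d. M$$(i,j) * \<rho>$$(j,i)))"
    unfolding trace_prod[OF Mc r] by (rule norm_sum)
  also have "\<dots> \<le> (\<Sum>i<d. \<Sum>j<d. cmod (M$$(i,j) * \<rho>$$(j,i)))"
    by (intro sum_mono norm_sum)
  also have "\<dots> \<le> (\<Sum>i<d. \<Sum>j<d. 2 * cmod (\<rho>$$(j,i)))"
    unfolding norm_mult
    by (intro sum_mono mult_right_mono eff_bound[OF M]) auto
  finally show ?thesis by linarith
qed

lemma ang_dem:
  assumes T: "\<Theta> \<subseteq> effects d" and r: "\<rho> \<in> pdensity d"
  shows "exp_ang \<rho> (compl_set d \<Theta>) = Re (mtrace \<rho>) - exp_dem \<rho> \<Theta>"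
proof (cases "\<Theta> = {}")
  case True
  then show ?thesis by (simp add: exp_ang_def exp_dem_def compl_set_def)
next
  case False
  have rc: "\<rho> \<in> carrier_mat d d" using r by (auto simp: pdensity_def positive_op_def)
  define c where "c = Re (mtrace \<rho>)"
  define g where "g = (\<lambda>M. Re (mtrace (M * \<rho>)))"
  have eq: "Re (mtrace ((1\<^sub>m d - M) * \<rho>)) = c - g M" if "M \<in> \<Theta>" for M
  proof -
    have Mc: "M \<in> carrier_mat d d" using T that by (auto simp: effects_def positive_op_def)
    have "(1\<^sub>m d - M) * \<rho> = \<rho> - M * \<rho>" using Mc rc
      by (simp add: minus_mult_distrib_mat[OF one_carrier_mat Mc rc] left_mult_one_mat)
    moreover have "mtrace (\<rho> - M * \<rho>) = mtrace \<rho> - mtrace (M * \<rho>)"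
      using Mc rc unfolding mtrace_def by (simp add: sum_subtractf)
    ultimately show ?thesis by (simp add: c_def g_def)
  qed
  have bb: "bdd_below (g ` \<Theta>)"
    using trace_lower[OF _ rc] T unfolding g_def bdd_below_def by blast
  have ba: "bdd_above ((\<lambda>M. c - g M) ` \<Theta>)"
  proof -
    obtain m where "\<forall>x\<in>g ` \<Theta>. m \<le> x" using bb unfolding bdd_below_def by blast
    then show ?thesis unfolding bdd_above_def by (rule_tac x="c - m" in exI) auto
  qed
  have "exp_ang \<rho> (compl_set d \<Theta>) = (SUP M\<in>\<Theta>. c - g M)"
    using False unfolding exp_ang_def compl_set_def
    by (simp only: image_is_empty if_False image_image) (rule SUP_cong, auto simp: eq)
  also have "\<dots> = c - (INF M\<in>\<Theta>. g M)"
  proof (rule order_antisym)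
    show "(SUP M\<in>\<Theta>. c - g M) \<le> c - (INF M\<in>\<Theta>. g M)"
      using False bb by (intro cSUP_least) (auto intro: cINF_lower)
    have "c - (SUP M\<in>\<Theta>. c - g M) \<le> (INF M\<in>\<Theta>. g M)"
    proof (intro cINF_greatest False)
      fix M assume "M \<in> \<Theta>"
      then have "c - g M \<le> (SUP M\<in>\<Theta>. c - g M)" using ba by (intro cSUP_upper)
      then show "c - (SUP M\<in>\<Theta>. c - g M) \<le> g M" by linarith
    qed
    then show "c - (INF M\<in>\<Theta>. g M) \<le> (SUP M\<in>\<Theta>. c - g M)" by linarith
  qed
  also have "\<dots> = Re (mtrace \<rho>) - exp_dem \<rho> \<Theta>"
    using False by (simp add: exp_dem_def c_def g_def)
  finally show ?thesis .
qed

theorem lemma3p3: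
  fixes d :: nat and \<Theta> \<Psi> :: "complex mat set"
  assumes "\<Theta> \<subseteq> effects d" and "\<Psi> \<subseteq> effects d"
  shows "(dem_le d \<Theta> \<Psi> \<longleftrightarrow> ang_le d (compl_set d \<Psi>) (compl_set d \<Theta>))
       \<and> (smyth_le d \<Theta> \<Psi> \<longleftrightarrow> hoare_le d (compl_set d \<Psi>) (compl_set d \<Theta>))"
proof
  show "dem_le d \<Theta> \<Psi> \<longleftrightarrow> ang_le d (compl_set d \<Psi>) (compl_set d \<Theta>)"
    unfolding dem_le_def ang_le_def using ang_dem[OF assms(1)] ang_dem[OF assms(2)]
    by auto
  have key: "loewner_le d M N \<longleftrightarrow> loewner_le d (1\<^sub>m d - N) (1\<^sub>m d - M)"
    if "M \<in> effects d" "N \<in> effects d" for M N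
  proof -
    have Mc: "M \<in> carrier_mat d d" and Nc: "N \<in> carrier_mat d d"
      using that by (auto simp: effects_def positive_op_def)
    have "(1\<^sub>m d - M) - (1\<^sub>m d - N) = N - M"
      using Mc Nc by (intro eq_matI) auto
    then show ?thesis using Mc Nc unfolding loewner_le_def
      by (auto simp: minus_carrier_mat)
  qed
  show "smyth_le d \<Theta> \<Psi> \<longleftrightarrow> hoare_le d (compl_set d \<Psi>) (compl_set d \<Theta>)"
    unfolding smyth_le_def hoare_le_def compl_set_def using key assms by blast
qed

end
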